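(* Let $W\in[0,1]^{k\times k}$ and consider the collaborative learning problem with strategy space $\mathbb{R}_+^k$, linear utilities $u_i({\boldsymbol\theta})=\sum_jW_{ij}\theta_j$ and thresholds $\mu_i$. If $W_{ij}<W_{ii}$ for all $i\ne j$, then every stable equilibrium is envy-free.
   Context: ${\boldsymbol\theta}$ is feasible if $u_i({\boldsymbol\theta})\ge\mu_i$ for all $i$. A feasible ${\boldsymbol\theta}$ is a stable equilibrium if for no $i$ is there $0\le\theta_i'<\theta_i$ with $u_i(\theta_i',{\boldsymbol\theta}_{-i})\ge\mu_i$ (${\boldsymbol\theta}$ with $i$-th entry replaced). A feasible ${\boldsymbol\theta}$ is envy-free if there are no $i,j$ with $\theta_j<\theta_i$ and $u_i({\boldsymbol\theta}^{(i,j)})\ge\mu_i$, where ${\boldsymbol\theta}^{(i,j)}$ is ${\boldsymbol\theta}$ with entries $i$ and $j$ swapped. *)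

theory Defs
  imports Complex_Main
begin

definition strategy :: "('k \<Rightarrow> real) \<Rightarrow> bool" where
  "strategy \<theta> \<longleftrightarrow> (\<forall>j. \<theta> j \<ge> 0)"

definition feasible :: "('k \<Rightarrow> ('k \<Rightarrow> real) \<Rightarrow> real) \<Rightarrow> ('k \<Rightarrow> real) \<Rightarrow> ('k \<Rightarrow> real) \<Rightarrow> bool" where
  "feasible u \<mu> \<theta> \<longleftrightarrow> strategy \<theta> \<and> (\<forall>i. u i \<theta> \<ge> \<mu> i)"

definition stable_equilibrium :: "('k \<Rightarrow> ('k \<Rightarrow> real) \<Rightarrow> real) \<Rightarrow> ('k \<Rightarrow> real) \<Rightarrow> ('k \<Rightarrow> real) \<Rightarrow> bool" where
  "stable_equilibrium u \<mu> \<theta> \<longleftrightarrow> feasible u \<mu> \<theta> \<and>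
     \<not> (\<exists>i t. 0 \<le> t \<and> t < \<theta> i \<and> u i (\<theta>(i := t)) \<ge> \<mu> i)"

definition swap_entries :: "('k \<Rightarrow> real) \<Rightarrow> 'k \<Rightarrow> 'k \<Rightarrow> ('k \<Rightarrow> real)" where
  "swap_entries \<theta> i j = \<theta>(i := \<theta> j, j := \<theta> i)"

definition envy_free :: "('k \<Rightarrow> ('k \<Rightarrow> real) \<Rightarrow> real) \<Rightarrow> ('k \<Rightarrow> real) \<Rightarrow> ('k \<Rightarrow> real) \<Rightarrow> bool" where
  "envy_free u \<mu> \<theta> \<longleftrightarrow> feasible u \<mu> \<theta> \<and>
     \<not> (\<exists>i j. \<theta> j < \<theta> i \<and> u i (swap_entries \<theta> i j) \<ge> \<mu> i)"

end

theory Submission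
  imports Defs
begin

lemma sum_upd:
  fixes g :: "'k::finite \<Rightarrow> real"
  shows "(\<Sum>k\<in>UNIV. g k * (f(i := a)) k) = (\<Sum>k\<in>UNIV. g k * f k) + g i * (a - f i)"
proof -
  have "(\<Sum>k\<in>UNIV. g k * (f(i := a)) k) = g i * a + (\<Sum>k\<in>UNIV-{i}. g k * (f(i := a)) k)"
    by (simp add: sum.remove[of UNIV i])
  also have "(\<Sum>k\<in>UNIV-{i}. g k * (f(i := a)) k) = (\<Sum>k\<in>UNIV-{i}. g k * f k)"
    by (rule sum.cong) auto
  also have "(\<Sum>k\<in>UNIV. g k * f k) = g i * f i + (\<Sum>k\<in>UNIV-{i}. g k * f k)"
    by (simp add: sum.remove[of UNIV i])
  ultimately show ?thesis by (simp add: algebra_simps)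
qed

theorem theorem7:
  fixes W :: "'k::finite \<Rightarrow> 'k \<Rightarrow> real" and \<mu> :: "'k \<Rightarrow> real" and \<theta> :: "'k \<Rightarrow> real"
  assumes W01: "\<And>i j. 0 \<le> W i j \<and> W i j \<le> 1"
    and diag: "\<And>i j. i \<noteq> j \<Longrightarrow> W i j < W i i"
    and stable: "stable_equilibrium (\<lambda>i \<theta>. \<Sum>j\<in>UNIV. W i j * \<theta> j) \<mu> \<theta>"
  shows "envy_free (\<lambda>i \<theta>. \<Sum>j\<in>UNIV. W i j * \<theta> j) \<mu> \<theta>"
proof -
  have feas: "feasible (\<lambda>i \<theta>. \<Sum>j\<in>UNIV. W i j * \<theta> j) \<mu> \<theta>"
    and ns: "\<And>i t. 0 \<le> t \<Longrightarrow> t < \<theta> i \<Longrightarrow> \<not> (\<Sum>j\<in>UNIV. W i j * (\<theta>(i := t)) j) \<ge> \<mu> i"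
    using stable unfolding stable_equilibrium_def by auto
  have nn: "\<And>j. \<theta> j \<ge> 0" using feas unfolding feasible_def strategy_def by auto
  show ?thesis unfolding envy_free_def
  proof (intro conjI feas notI, elim exE conjE)
    fix i j assume lt: "\<theta> j < \<theta> i"
      and ge: "\<mu> i \<le> (\<Sum>k\<in>UNIV. W i k * swap_entries \<theta> i j k)"
    have ij: "i \<noteq> j" using lt by auto
    let ?S = "\<Sum>k\<in>UNIV. W i k * \<theta> k"
    have "(\<Sum>k\<in>UNIV. W i k * swap_entries \<theta> i j k)
        = ?S + W i i * (\<theta> j - \<theta> i) + W i j * (\<theta> i - \<theta> j)"
      unfolding swap_entries_def using ij
      by (simp only: sum_upd[of "W i" "\<theta>(i := \<theta> j)" j "\<theta> i"] sum_upd[of "W i" "\<theta>" i "\<theta> j"]) simp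
    hence sw: "(\<Sum>k\<in>UNIV. W i k * swap_entries \<theta> i j k) = ?S - (W i i - W i j) * (\<theta> i - \<theta> j)"
      by (simp add: algebra_simps)
    have wii: "W i i > W i j" "W i j \<ge> 0" using diag[OF ij] W01 by auto
    define t where "t = \<theta> i - (W i i - W i j) * (\<theta> i - \<theta> j) / W i i"
    have "(\<Sum>k\<in>UNIV. W i k * (\<theta>(i := t)) k) = ?S + W i i * (t - \<theta> i)" by (rule sum_upd)
    also have "\<dots> = ?S - (W i i - W i j) * (\<theta> i - \<theta> j)" unfolding t_def using wii by simp
    finally have u: "(\<Sum>k\<in>UNIV. W i k * (\<theta>(i := t)) k) \<ge> \<mu> i" using sw ge by simp
    have "(W i i - W i j) * (\<theta> i - \<theta> j) > 0" using wii lt by simp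
    hence "t < \<theta> i" unfolding t_def using wii by simp
    moreover have "t \<ge> \<theta> j"
    proof -
      have "(W i i - W i j) * (\<theta> i - \<theta> j) \<le> W i i * (\<theta> i - \<theta> j)"
        using wii lt by (intro mult_right_mono) auto
      hence "(W i i - W i j) * (\<theta> i - \<theta> j) / W i i \<le> \<theta> i - \<theta> j"
        using wii by (simp add: divide_le_eq mult.commute)
      thus ?thesis unfolding t_def by simp
    qed
    ultimately show False using ns[of t i] u nn[of j] by auto
  qed
qed

end
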